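(* Let $N\ge3$, $M\ge2$, and let $\mathcal{F}$ be an $M\times N$ circular Florentine rectangle over $\mathbb{Z}_N$ with rows $\pi_0,\dots,\pi_{M-1}$; put $g_{i,j}=\pi_i^{-1}(j)$. Let $T\ge1$, $P=N+T$, $L=NP$, let $\mathcal{I}\subseteq\mathbb{Z}_P$ with $|\mathcal{I}|=T$, and write $\mathbb{Z}_P\setminus\mathcal{I}=\{l_0<l_1<\dots<l_{N-1}\}$. Let $a^i_{j,t}=\sqrt{P/N}\,\omega_N^{j g_{i,t}}$ and define the $N\times P$ matrix $\mathcal{B}^i=(b^i_{j,k})$ by $b^i_{j,k}=a^i_{j,t}\omega_{NP}^{k g_{i,t}}$ if $k=l_t$, and $b^i_{j,k}=0$ if $k\in\mathcal{I}$. Let $\hat u^i_n=b^i_{r,s}$ with $r=\lfloor n/P\rfloor$, $s=n-Pr$ ($0\le n<L$), and let $U^i$ be the time-domain sequence $u^i_t=\frac{1}{\sqrt L}\sum_{n=0}^{L-1}\hat u^i_n\omega_L^{nt}$. With $\theta_a=\max\{|\theta_{U^i}(\tau)|:0\le i<M,\ 0<\tau<L\}$ and $\theta_c=\max\{|\theta_{U^i,U^{i'}}(\tau)|:i\ne i',\ 0\le\tau<L\}$: (1) $\theta_a\ge P\sqrt{\frac{N(P-N)}{P-1}}$, with equality if $\mathbb{Z}_P\setminus\mathcal{I}$ is a cyclic difference set over $\mathbb{Z}_P$; (2) $\theta_c=P$; (3) with $\Omega=\{s+aP:s\in\mathcal{I},a\in\mathbb{Z}_N\}$, for every $i$ one has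 $\hat u^i_n=0$ for $n\in\Omega$ and $|\hat u^i_n|=\sqrt{P/N}$ for $n\notin\Omega$.
   Context: $\omega_n=e^{2\pi\sqrt{-1}/n}$. An $M\times N$ circular Florentine rectangle (CFR) over $\mathbb{Z}_N$ is an $M\times N$ array whose rows $\pi_i:\mathbb{Z}_N\to\mathbb{Z}_N$ are permutations such that for every $m\in\mathbb{Z}_N\setminus\{0\}$ and all $i,j,x,y$: $(\pi_i(x),\pi_i(x+m))=(\pi_j(y),\pi_j(y+m))$ (indices mod $N$) iff $i=j$ and $x=y$. $\pi_i^{-1}$ is the inverse permutation with values in $\{0,\dots,N-1\}$. Periodic correlation: $\theta_{C,D}(\tau)=\sum_{t=0}^{L-1}c_td^*_{\langle t+\tau\rangle_L}$, $\theta_C=\theta_{C,C}$. A subset $\mathcal{D}\subseteq\mathbb{Z}_v$ with $|\mathcal{D}|=k$ is a $(v,k,\lambda)$ cyclic difference set if $|(\varepsilon+\mathcal{D})\cap\mathcal{D}|=\lambda$ for every nonzero $\varepsilon\in\mathbb{Z}_v$. *)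

theory Defs
  imports Complex_Main
begin

definition omega :: "nat \<Rightarrow> complex" where
  "omega n = cis (2 * pi / real n)"

definition is_CFR :: "nat \<Rightarrow> nat \<Rightarrow> (nat \<Rightarrow> nat \<Rightarrow> nat) \<Rightarrow> bool" where
  "is_CFR M N rows \<longleftrightarrow>
     (\<forall>i<M. bij_betw (rows i) {..<N} {..<N}) \<and>
     (\<forall>m\<in>{1..<N}. \<forall>i<M. \<forall>j<M. \<forall>x<N. \<forall>y<N.
        ((rows i x, rows i ((x + m) mod N)) = (rows j y, rows j ((y + m) mod N)))
        \<longleftrightarrow> (i = j \<and> x = y))"

definition ginv :: "nat \<Rightarrow> (nat \<Rightarrow> nat \<Rightarrow> nat) \<Rightarrow> nat \<Rightarrow> nat \<Rightarrow> nat" where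
  "ginv N rows i j = inv_into {..<N} (rows i) j"

definition lseq :: "nat \<Rightarrow> nat set \<Rightarrow> nat list" where
  "lseq P I = sorted_list_of_set ({..<P} - I)"

definition acoef :: "nat \<Rightarrow> nat \<Rightarrow> (nat \<Rightarrow> nat \<Rightarrow> nat) \<Rightarrow> nat \<Rightarrow> nat \<Rightarrow> nat \<Rightarrow> complex" where
  "acoef N P rows i j t = complex_of_real (sqrt (real P / real N)) * omega N ^ (j * ginv N rows i t)"

definition bmat :: "nat \<Rightarrow> nat \<Rightarrow> nat set \<Rightarrow> (nat \<Rightarrow> nat \<Rightarrow> nat) \<Rightarrow> nat \<Rightarrow> nat \<Rightarrow> nat \<Rightarrow> complex" where
  "bmat N P I rows i j k =
     (if k \<in> I then 0
      else (let t = (THE t. t < N \<and> lseq P I ! t = k)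
            in acoef N P rows i j t * omega (N * P) ^ (k * ginv N rows i t)))"

definition uhat :: "nat \<Rightarrow> nat \<Rightarrow> nat set \<Rightarrow> (nat \<Rightarrow> nat \<Rightarrow> nat) \<Rightarrow> nat \<Rightarrow> nat \<Rightarrow> complex" where
  "uhat N P I rows i n = bmat N P I rows i (n div P) (n mod P)"

definition useq :: "nat \<Rightarrow> nat \<Rightarrow> nat set \<Rightarrow> (nat \<Rightarrow> nat \<Rightarrow> nat) \<Rightarrow> nat \<Rightarrow> nat \<Rightarrow> complex" where
  "useq N P I rows i t =
     (let L = N * P in
      (1 / complex_of_real (sqrt (real L))) * (\<Sum>n<L. uhat N P I rows i n * omega L ^ (n * t)))"

definition pcorr :: "nat \<Rightarrow> (nat \<Rightarrow> complex) \<Rightarrow> (nat \<Rightarrow> complex) \<Rightarrow> nat \<Rightarrow> complex" where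
  "pcorr L c d tau = (\<Sum>t<L. c t * cnj (d ((t + tau) mod L)))"

definition cyclic_difference_set :: "nat \<Rightarrow> nat \<Rightarrow> nat \<Rightarrow> nat set \<Rightarrow> bool" where
  "cyclic_difference_set v k lam D \<longleftrightarrow>
     D \<subseteq> {..<v} \<and> card D = k \<and>
     (\<forall>e\<in>{1..<v}. card ((\<lambda>d. (e + d) mod v) ` D \<inter> D) = lam)"

end

theory Submission
  imports Defs
begin

definition w :: "nat \<Rightarrow> int \<Rightarrow> complex" where
  "w n x = cis (2 * pi * of_int x / real n)"

lemma omega_pow: "omega n ^ k = w n (int k)"
  unfolding omega_def w_def DeMoivre by (simp add: field_simps)

lemma w_add: "w n x * w n y = w n (x + y)"
  unfolding w_def cis_mult by (simp add: add_divide_distrib distrib_left)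

lemma w_cnj: "cnj (w n x) = w n (- x)"
  unfolding w_def cis_cnj by simp

lemma w_norm[simp]: "cmod (w n x) = 1"
  unfolding w_def by simp

lemma w_dvd: assumes "n > 0" "int n dvd x" shows "w n x = 1"
proof -
  obtain k where "x = int n * k" using assms by (auto elim: dvdE)
  then have "2 * pi * of_int x / real n = 2 * pi * of_int k" using assms by simp
  then show ?thesis unfolding w_def by simp
qed

lemma w_cong: assumes "n > 0" "x mod int n = y mod int n" shows "w n x = w n y"
proof -
  have "int n dvd (x - y)" using assms by (simp add: mod_eq_dvd_iff)
  then have "w n (x - y) = 1" using w_dvd assms by blast
  then have "w n (x - y) * w n y = w n y" by simp
  then show ?thesis by (simp add: w_add)
qed

lemma w_pow: "w n x ^ k = w n (int k * x)"
  unfolding w_def DeMoivre by (simp add: field_simps)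

lemma w_scale: assumes "k > 0" shows "w (k * n) (int k * x) = w n x"
  unfolding w_def using assms by (simp add: field_simps)

lemma w_eq_1: assumes "n > 0" "w n x = 1" shows "int n dvd x"
proof -
  have "cos (2 * pi * of_int x / real n) = 1" using assms(2) unfolding w_def
    by (metis cis.simps(1) one_complex.simps(1))
  then obtain k :: int where k: "2 * pi * of_int x / real n = of_int k * 2 * pi"
    using cos_one_2pi_int by blast
  then have "real_of_int x = of_int k * real n" using assms(1) by (simp add: field_simps)
  then have "x = k * int n" by (metis of_int_eq_iff of_int_mult of_int_of_nat_eq)
  then show ?thesis by simp
qed

lemma w_geom: assumes "n > 0"
  shows "(\<Sum>r<n. w n (int r * x)) = (if int n dvd x then of_nat n else 0)"
proof (cases "int n dvd x")
  case True
  then have "\<And>r. w n (int r * x) = 1" using w_dvd assms by (simp add: dvd_mult)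
  then show ?thesis using True by simp
next
  case False
  then have ne: "w n x \<noteq> 1" using w_eq_1 assms by blast
  have "(\<Sum>r<n. w n (int r * x)) = (\<Sum>r<n. w n x ^ r)" by (simp add: w_pow)
  also have "\<dots> = (w n x ^ n - 1) / (w n x - 1)" using geometric_sum[OF ne] by simp
  also have "w n x ^ n = 1" unfolding w_pow using w_dvd assms by simp
  finally show ?thesis using False by simp
qed

lemma dvd_diff_small: assumes "n < L" "m < L" "int L dvd (int n - int m)" shows "n = m"
proof -
  have "\<bar>int n - int m\<bar> < int L" using assms by auto
  then show ?thesis using assms(3) using dvd_imp_le_int[of "int n - int m" "int L"] by force
qed

lemma pcorr_dft:
  assumes "L > 0"
  shows "pcorr L (\<lambda>t. (1 / complex_of_real (sqrt (real L))) * (\<Sum>n<L. a n * omega L ^ (n*t)))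
                 (\<lambda>t. (1 / complex_of_real (sqrt (real L))) * (\<Sum>n<L. b n * omega L ^ (n*t))) \<tau>
         = (\<Sum>n<L. a n * cnj (b n) * w L (- int (n*\<tau>)))"
proof -
  define s where "s = 1 / complex_of_real (sqrt (real L))"
  have cs: "cnj s = s" unfolding s_def by simp
  have ss: "s * s * of_nat L = 1" unfolding s_def using assms
    by (simp add: field_simps flip: of_real_mult)
  have per: "w L (- (int m * int ((t + \<tau>) mod L))) = w L (- (int m * (int t + int \<tau>)))" for m t
  proof (rule w_cong[OF assms])
    have "- (int m * int ((t + \<tau>) mod L)) = - (int m * ((int t + int \<tau>) mod int L))"
      by (simp add: zmod_int)
    then show "- (int m * int ((t + \<tau>) mod L)) mod int L = - (int m * (int t + int \<tau>)) mod int L"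
      by (metis mod_minus_eq mod_mult_right_eq)
  qed
  have wsplit: "w L (x - y) = w L x * w L (- y)" for x y by (simp add: w_add)
  have inner: "(\<Sum>t<L. w L (int n * int t - int m * int (t + \<tau>)))
      = (if n = m then of_nat L * w L (- int (n * \<tau>)) else 0)" if "n < L" "m < L" for n m
  proof -
    have "(\<Sum>t<L. w L (int n * int t - int m * int (t + \<tau>)))
        = (\<Sum>t<L. w L (- int (m * \<tau>)) * w L (int t * (int n - int m)))"
      by (intro sum.cong refl) (simp add: w_add algebra_simps)
    also have "\<dots> = w L (- int (m * \<tau>)) * (\<Sum>t<L. w L (int t * (int n - int m)))"
      by (simp add: sum_distrib_left)
    also have "\<dots> = (if n = m then of_nat L * w L (- int (n * \<tau>)) else 0)"
      using w_geom[OF assms, of "int n - int m"] dvd_diff_small[OF that] by auto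
    finally show ?thesis .
  qed
  have "pcorr L (\<lambda>t. s * (\<Sum>n<L. a n * omega L ^ (n*t))) (\<lambda>t. s * (\<Sum>n<L. b n * omega L ^ (n*t))) \<tau>
      = (\<Sum>t<L. s * s * ((\<Sum>n<L. a n * w L (int n * int t)) *
            (\<Sum>m<L. cnj (b m) * w L (- (int m * int (t + \<tau>))))))"
    unfolding pcorr_def omega_pow
    by (intro sum.cong refl) (simp add: cs w_cnj per sum_distrib_left mult_ac)
  also have "\<dots> = s * s * (\<Sum>t<L. \<Sum>n<L. \<Sum>m<L. a n * cnj (b m) * w L (int n * int t - int m * int (t + \<tau>)))"
    unfolding sum_distrib_left[symmetric]
    by (intro arg_cong[where f="\<lambda>x. s * s * x"] sum.cong refl)
       (simp add: sum_product wsplit mult_ac)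
  also have "\<dots> = s * s * (\<Sum>n<L. \<Sum>m<L. a n * cnj (b m) * (\<Sum>t<L. w L (int n * int t - int m * int (t + \<tau>))))"
    proof -
    have "(\<Sum>t<L. \<Sum>n<L. \<Sum>m<L. F n m t) = (\<Sum>n<L. \<Sum>m<L. \<Sum>t<L. F n m t)" for F :: "nat \<Rightarrow> nat \<Rightarrow> nat \<Rightarrow> complex"
      by (rule trans[OF sum.swap], rule sum.cong[OF refl], rule sum.swap)
    then show ?thesis by (simp only: sum_distrib_left)
  qed
  also have "\<dots> = s * s * (\<Sum>n<L. \<Sum>m<L. (if n = m then a n * cnj (b m) * of_nat L * w L (- int (n * \<tau>)) else 0))"
  proof (intro arg_cong[where f="\<lambda>x. s * s * x"] sum.cong refl)
    fix n m assume "n \<in> {..<L}" "m \<in> {..<L}"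
    then have "(\<Sum>t<L. w L (int n * int t - int m * int (t + \<tau>)))
      = (if n = m then of_nat L * w L (- int (n * \<tau>)) else 0)" using inner by simp
    then show "a n * cnj (b m) * (\<Sum>t<L. w L (int n * int t - int m * int (t + \<tau>)))
      = (if n = m then a n * cnj (b m) * of_nat L * w L (- int (n * \<tau>)) else 0)" by simp
  qed
  also have "\<dots> = s * s * of_nat L * (\<Sum>n<L. a n * cnj (b n) * w L (- int (n * \<tau>)))"
    by (simp add: sum_distrib_left mult_ac)
  finally show ?thesis unfolding s_def[symmetric] using ss by simp
qed

lemma sum_grid: fixes f :: "nat \<Rightarrow> 'a::comm_monoid_add" shows "(\<Sum>n<N*P. f n) = (\<Sum>r<N. \<Sum>s<P. f (r*P + s))"
proof -
  have "(\<Sum>n<N*P. f n) = (\<Sum>r<N. sum f {r*P..<r*P+P})" using sum.nat_group[of f P N] by simp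
  also have "\<dots> = (\<Sum>r<N. \<Sum>s<P. f (r*P + s))"
  proof (rule sum.cong[OF refl])
    fix r
    have "sum f {r*P..<r*P+P} = sum f ((\<lambda>s. r*P + s) ` {..<P})"
      by (simp add: image_add_atLeastLessThan lessThan_atLeast0 add.commute)
    also have "\<dots> = (\<Sum>s<P. f (r*P + s))" by (subst sum.reindex) (auto simp: inj_on_def)
    finally show "sum f {r*P..<r*P+P} = (\<Sum>s<P. f (r*P + s))" .
  qed
  finally show ?thesis .
qed

locale cfrs =
  fixes N M T P :: nat and rows :: "nat \<Rightarrow> nat \<Rightarrow> nat" and I :: "nat set"
  assumes N3: "N \<ge> 3" and M2: "M \<ge> 2" and cfr: "is_CFR M N rows"
    and T1: "T \<ge> 1" and PNT: "P = N + T"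
    and IP: "I \<subseteq> {..<P}" and cI: "card I = T"
begin

definition "D = {..<P} - I"
definition "l t = lseq P I ! t"
definition "tix s = (THE t. t < N \<and> lseq P I ! t = s)"

lemma finI: "finite I" using IP finite_subset by blast

lemma cardD: "card D = N"
  unfolding D_def using IP finI cI PNT by (simp add: card_Diff_subset)

lemma lseq_props: "distinct (lseq P I)" "set (lseq P I) = D" "length (lseq P I) = N"
  unfolding lseq_def D_def using cardD[unfolded D_def] by auto

lemma bij_l: "bij_betw l {..<N} D"
  unfolding l_def[abs_def] using lseq_props by (intro bij_betw_nth) auto

lemma l_in: "t < N \<Longrightarrow> l t \<in> D" using bij_l by (auto simp: bij_betw_def)

lemma tix_l: assumes "t < N" shows "tix (l t) = t"
  unfolding tix_def
proof (rule the_equality)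
  show "t < N \<and> lseq P I ! t = l t" using assms l_def by simp
  fix t' assume "t' < N \<and> lseq P I ! t' = l t"
  then show "t' = t" using lseq_props assms unfolding l_def by (metis nth_eq_iff_index_eq)
qed

lemma D_l: assumes "s \<in> D" shows "tix s < N" "l (tix s) = s"
proof -
  have "s \<in> l ` {..<N}" using assms bij_betw_imp_surj_on[OF bij_l] by simp
  then obtain t where "t < N" "l t = s" by auto
  then show "tix s < N" "l (tix s) = s" using tix_l by auto
qed

lemma sum_D: "(\<Sum>s<P. if s \<in> I then 0 else h s) = (\<Sum>t<N. h (l t))"
proof -
  have "(\<Sum>s<P. if s \<in> I then 0 else h s) = (\<Sum>s\<in>D. h s)"
    unfolding D_def by (simp add: sum.If_cases Diff_eq Int_commute)
  also have "\<dots> = (\<Sum>t<N. h (l t))" using sum.reindex_bij_betw[OF bij_l, of h] by simp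
  finally show ?thesis .
qed

lemma ginv_props: assumes "i < M" "j < N"
  shows "ginv N rows i j < N" "rows i (ginv N rows i j) = j"
proof -
  have b: "bij_betw (rows i) {..<N} {..<N}" using cfr assms unfolding is_CFR_def by auto
  show "ginv N rows i j < N" unfolding ginv_def using b assms
    by (metis bij_betw_def inv_into_into lessThan_iff)
  show "rows i (ginv N rows i j) = j" unfolding ginv_def using b assms
    by (metis bij_betw_inv_into_right lessThan_iff)
qed

definition "c = complex_of_real (sqrt (real P / real N))"

lemma Ppos: "P > 0" and Npos: "N > 0" using PNT N3 by auto

lemma uhat_form: assumes "n < N*P"
  shows "uhat N P I rows i n = (if n mod P \<in> I then 0
           else c * w (N*P) (int n * int (ginv N rows i (tix (n mod P)))))"
proof (cases "n mod P \<in> I")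
  case True then show ?thesis unfolding uhat_def bmat_def by simp
next
  case False
  define g where "g = ginv N rows i (tix (n mod P))"
  have "uhat N P I rows i n = c * omega N ^ (n div P * g) * omega (N*P) ^ (n mod P * g)"
    using False unfolding uhat_def bmat_def acoef_def Let_def c_def g_def tix_def by simp
  also have "omega N ^ (n div P * g) = w (N*P) (int P * int (n div P * g))"
    unfolding omega_pow using w_scale[of P N "int (n div P * g)"] Ppos by (simp add: mult.commute)
  also have "c * w (N*P) (int P * int (n div P * g)) * omega (N*P) ^ (n mod P * g)
      = c * w (N*P) (int P * int (n div P * g) + int (n mod P * g))"
    unfolding omega_pow by (simp add: w_add[symmetric] mult.assoc)
  also have "int P * int (n div P * g) + int (n mod P * g) = int n * int g"
  proof -
    have "int n = int (n div P) * int P + int (n mod P)"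
      by (metis div_mult_mod_eq of_nat_add of_nat_mult)
    then have "int n * int g = (int (n div P) * int P + int (n mod P)) * int g" by simp
    then show ?thesis by (simp add: algebra_simps)
  qed
  finally show ?thesis using False g_def by simp
qed

lemma Omega_iff: assumes "n < N*P"
  shows "n \<in> {s + a * P | s a. s \<in> I \<and> a < N} \<longleftrightarrow> n mod P \<in> I"
proof
  assume "n \<in> {s + a * P | s a. s \<in> I \<and> a < N}"
  then obtain s a where "s \<in> I" "n = s + a * P" by auto
  moreover have "s < P" using \<open>s \<in> I\<close> IP by auto
  ultimately show "n mod P \<in> I" by simp
next
  assume h: "n mod P \<in> I"
  have "n div P < N" using assms by (simp add: less_mult_imp_div_less)
  moreover have "n = n mod P + (n div P) * P" by simp
  ultimately show "n \<in> {s + a * P | s a. s \<in> I \<and> a < N}" using h by blast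
qed

lemma cmod_c: "cmod c = sqrt (real P / real N)" unfolding c_def by simp

lemma cc: "c * cnj c = of_real (real P / real N)"
  unfolding c_def by (simp flip: of_real_mult)

lemma useq_corr: "pcorr (N*P) (useq N P I rows i) (useq N P I rows i') \<tau>
   = (\<Sum>n<N*P. uhat N P I rows i n * cnj (uhat N P I rows i' n) * w (N*P) (- int (n*\<tau>)))"
proof -
  have e: "useq N P I rows j = (\<lambda>t. (1 / complex_of_real (sqrt (real (N*P)))) *
      (\<Sum>n<N*P. uhat N P I rows j n * omega (N*P) ^ (n*t)))" for j
    unfolding useq_def Let_def by simp
  show ?thesis unfolding e by (rule pcorr_dft) (use Ppos Npos in simp)
qed

lemma w3: "c * w L x * cnj (c * w L y) * w L z = c * cnj c * w L (x - y + z)"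
proof -
  have "w L (x - y + z) = w L x * w L (-y) * w L z" by (simp add: w_add)
  then show ?thesis by (simp add: w_cnj mult_ac)
qed

lemma corr_general: assumes "i < M" "i' < M"
  shows "pcorr (N*P) (useq N P I rows i) (useq N P I rows i') \<tau> =
    (\<Sum>t<N. if int N dvd (int (ginv N rows i t) - int (ginv N rows i' t) - int \<tau>)
       then of_nat P * w (N*P) (int (l t) * (int (ginv N rows i t) - int (ginv N rows i' t) - int \<tau>))
       else 0)"
proof -
  define E where "E s = int (ginv N rows i (tix s)) - int (ginv N rows i' (tix s)) - int \<tau>" for s
  define e where "e t = int (ginv N rows i t) - int (ginv N rows i' t) - int \<tau>" for t
  define K where "K = complex_of_real (real P / real N)"
  have "pcorr (N*P) (useq N P I rows i) (useq N P I rows i') \<tau>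
     = (\<Sum>n<N*P. if n mod P \<in> I then 0 else K * w (N*P) (int n * E (n mod P)))"
    unfolding useq_corr
  proof (rule sum.cong[OF refl])
    fix n assume "n \<in> {..<N*P}"
    then have n: "n < N*P" by simp
    show "uhat N P I rows i n * cnj (uhat N P I rows i' n) * w (N * P) (- int (n * \<tau>)) =
         (if n mod P \<in> I then 0 else K * w (N * P) (int n * E (n mod P)))"
    proof (cases "n mod P \<in> I")
      case False
      have ex: "int n * int (ginv N rows i (tix (n mod P))) - int n * int (ginv N rows i' (tix (n mod P)))
           + - int (n * \<tau>) = int n * E (n mod P)"
        unfolding E_def by (simp add: algebra_simps)
      have "uhat N P I rows i n * cnj (uhat N P I rows i' n) * w (N * P) (- int (n * \<tau>)) =
        c * w (N*P) (int n * int (ginv N rows i (tix (n mod P)))) *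
        cnj (c * w (N*P) (int n * int (ginv N rows i' (tix (n mod P))))) * w (N * P) (- int (n * \<tau>))"
        using False by (simp only: uhat_form[OF n] if_False)
      also have "\<dots> = K * w (N * P) (int n * E (n mod P))" unfolding w3 cc K_def ex ..
      finally show ?thesis using False by simp
    qed (simp add: uhat_form[OF n])
  qed
  also have "\<dots> = (\<Sum>r<N. \<Sum>s<P. if s \<in> I then 0 else K * w (N*P) (int (r*P+s) * E s))"
    unfolding sum_grid by (intro sum.cong refl) simp
  also have "\<dots> = (\<Sum>s<P. if s \<in> I then 0 else (\<Sum>r<N. K * w (N*P) (int (r*P+s) * E s)))"
    by (subst sum.swap) (intro sum.cong refl, simp)
  also have "\<dots> = (\<Sum>t<N. \<Sum>r<N. K * w (N*P) (int (r*P + l t) * e t))"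
    unfolding sum_D by (intro sum.cong refl) (simp add: E_def e_def tix_l)
  also have "\<dots> = (\<Sum>t<N. K * w (N*P) (int (l t) * e t) * (\<Sum>r<N. w N (int r * e t)))"
  proof (intro sum.cong refl)
    fix t
    have "w (N*P) (int (r*P + l t) * e t) = w (N*P) (int (l t) * e t) * w N (int r * e t)" for r
    proof -
      have "w N (int r * e t) = w (P*N) (int P * (int r * e t))" using w_scale Ppos by simp
      then have "w N (int r * e t) = w (N*P) (int (r*P) * e t)" by (simp add: mult_ac)
      then show ?thesis by (simp add: w_add algebra_simps)
    qed
    then show "(\<Sum>r<N. K * w (N*P) (int (r*P + l t) * e t)) = K * w (N*P) (int (l t) * e t) * (\<Sum>r<N. w N (int r * e t))"
      by (simp only: sum_distrib_left sum_distrib_right mult.assoc)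
  qed
  also have "\<dots> = (\<Sum>t<N. if int N dvd e t then of_nat P * w (N*P) (int (l t) * e t) else 0)"
  proof (intro sum.cong refl)
    fix t
    have "K * of_nat N = complex_of_real (real P / real N * real N)"
      unfolding K_def by (simp only: of_real_mult of_real_of_nat_eq)
    then have "K * of_nat N = of_nat P" using Npos by simp
    then show "K * w (N*P) (int (l t) * e t) * (\<Sum>r<N. w N (int r * e t)) =
        (if int N dvd e t then of_nat P * w (N*P) (int (l t) * e t) else 0)"
      unfolding w_geom[OF Npos] by (simp add: mult_ac)
  qed
  finally show ?thesis unfolding e_def .
qed

lemma cfr_inj:
  assumes "i < M" "i' < M" "i \<noteq> i'" "t < N" "t' < N"
    and eq: "(int (ginv N rows i t) - int (ginv N rows i' t)) mod int N
           = (int (ginv N rows i t') - int (ginv N rows i' t')) mod int N"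
  shows "t = t'"
proof (rule ccontr)
  assume ne: "t \<noteq> t'"
  define x where "x = ginv N rows i t"
  define x' where "x' = ginv N rows i t'"
  define y where "y = ginv N rows i' t"
  define y' where "y' = ginv N rows i' t'"
  have xs: "x < N" "x' < N" "y < N" "y' < N" "rows i x = t" "rows i x' = t'" "rows i' y = t" "rows i' y' = t'"
    using ginv_props assms unfolding x_def x'_def y_def y'_def by auto
  have "x \<noteq> x'" using xs ne by auto
  define m where "m = nat ((int x' - int x) mod int N)"
  have mi: "int m = (int x' - int x) mod int N" unfolding m_def using Npos by simp
  have "int m < int N" unfolding mi using Npos by simp
  then have "m < N" by simp
  have "m \<noteq> 0"
  proof
    assume "m = 0"
    then have "int N dvd (int x' - int x)" using mi by (simp add: mod_eq_0_iff_dvd)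
    then have "int x' = int x" using dvd_diff_small[OF xs(2) xs(1)] by simp
    then show False using \<open>x \<noteq> x'\<close> by simp
  qed
  have hx: "(x + m) mod N = x'"
  proof -
    have "int ((x + m) mod N) = (int x + (int x' - int x) mod int N) mod int N" by (simp add: zmod_int mi)
    also have "\<dots> = int x' mod int N" by (simp add: mod_add_right_eq)
    also have "\<dots> = int x'" using xs by simp
    finally show ?thesis by simp
  qed
  have hy: "(y + m) mod N = y'"
  proof -
    have e2: "(int x' - int x) mod int N = (int y' - int y) mod int N"
    proof -
      have "(int x - int y) mod int N = (int x' - int y') mod int N" using eq unfolding x_def y_def x'_def y'_def .
      then have "int N dvd ((int x - int y) - (int x' - int y'))" by (simp only: mod_eq_dvd_iff)
      then have "int N dvd - ((int x' - int x) - (int y' - int y))" by (simp add: algebra_simps)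
      then have "int N dvd ((int x' - int x) - (int y' - int y))" by (simp only: dvd_minus_iff)
      then show ?thesis by (simp only: mod_eq_dvd_iff)
    qed
    have "int ((y + m) mod N) = (int y + (int y' - int y) mod int N) mod int N" by (simp add: zmod_int mi e2)
    also have "\<dots> = int y' mod int N" by (simp add: mod_add_right_eq)
    also have "\<dots> = int y'" using xs by simp
    finally show ?thesis by simp
  qed
  have "m \<in> {1..<N}" using \<open>m < N\<close> \<open>m \<noteq> 0\<close> by simp
  then have "((rows i x, rows i ((x + m) mod N)) = (rows i' y, rows i' ((y + m) mod N))) \<longleftrightarrow> (i = i' \<and> x = y)"
  proof -
    have "\<forall>m\<in>{1..<N}. \<forall>i<M. \<forall>j<M. \<forall>x<N. \<forall>y<N.
        ((rows i x, rows i ((x + m) mod N)) = (rows j y, rows j ((y + m) mod N)))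
        \<longleftrightarrow> (i = j \<and> x = y)" using cfr unfolding is_CFR_def by (rule conjunct2)
    from this[rule_format, OF \<open>m \<in> {1..<N}\<close> assms(1) assms(2) xs(1) xs(3)] show ?thesis .
  qed
  then show False using hx hy xs assms(3) by simp
qed

lemma cross: assumes "i < M" "i' < M" "i \<noteq> i'"
  shows "cmod (pcorr (N*P) (useq N P I rows i) (useq N P I rows i') \<tau>) = real P"
proof -
  define e where "e t = int (ginv N rows i t) - int (ginv N rows i' t) - int \<tau>" for t
  define \<phi> where "\<phi> t = (int (ginv N rows i t) - int (ginv N rows i' t)) mod int N" for t
  have inj: "inj_on \<phi> {..<N}"
  proof (rule inj_onI)
    fix t t' assume "t \<in> {..<N}" "t' \<in> {..<N}" "\<phi> t = \<phi> t'"
    then show "t = t'" using cfr_inj[OF assms, of t t'] unfolding \<phi>_def by simp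
  qed
  have sub: "\<phi> ` {..<N} \<subseteq> {0..<int N}" unfolding \<phi>_def using Npos by auto
  have "card (\<phi> ` {..<N}) = card {0..<int N}" using card_image[OF inj] by simp
  then have img: "\<phi> ` {..<N} = {0..<int N}" using card_subset_eq[OF _ sub] by simp
  have "int \<tau> mod int N \<in> {0..<int N}" using Npos by simp
  then obtain t0 where t0: "t0 < N" "\<phi> t0 = int \<tau> mod int N" using img by (metis imageE lessThan_iff)
  have dv: "int N dvd e t \<longleftrightarrow> \<phi> t = int \<tau> mod int N" for t
    unfolding e_def \<phi>_def by (simp add: mod_eq_dvd_iff)
  have "pcorr (N*P) (useq N P I rows i) (useq N P I rows i') \<tau> =
     (\<Sum>t<N. if int N dvd e t then of_nat P * w (N*P) (int (l t) * e t) else 0)"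
    unfolding corr_general[OF assms(1,2)] e_def ..
  also have "\<dots> = of_nat P * w (N*P) (int (l t0) * e t0)"
  proof -
    have "(\<Sum>t<N. if int N dvd e t then of_nat P * w (N*P) (int (l t) * e t) else 0)
      = (if int N dvd e t0 then of_nat P * w (N*P) (int (l t0) * e t0) else 0) +
        (\<Sum>t\<in>{..<N} - {t0}. if int N dvd e t then of_nat P * w (N*P) (int (l t) * e t) else 0)"
      using t0 by (subst sum.remove[of _ t0]) auto
    also have "(\<Sum>t\<in>{..<N} - {t0}. if int N dvd e t then of_nat P * w (N*P) (int (l t) * e t) else 0) = 0"
    proof (rule sum.neutral, rule ballI)
      fix t assume "t \<in> {..<N} - {t0}"
      then have "\<not> int N dvd e t" using dv inj t0 unfolding inj_on_def by auto
      then show "(if int N dvd e t then of_nat P * w (N*P) (int (l t) * e t) else 0) = 0" by simp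
    qed
    finally show ?thesis using dv t0 by simp
  qed
  finally show ?thesis by (simp add: norm_mult)
qed

definition "S m = (\<Sum>s\<in>D. w P (- (int s * int m)))"

lemma finD: "finite D" unfolding D_def by simp
lemma D_sub: "s \<in> D \<Longrightarrow> s < P" unfolding D_def by simp

lemma autoc: assumes "i < M"
  shows "pcorr (N*P) (useq N P I rows i) (useq N P I rows i) \<tau> =
     (if N dvd \<tau> then of_nat P * S (\<tau> div N) else 0)"
proof -
  have c: "pcorr (N*P) (useq N P I rows i) (useq N P I rows i) \<tau> =
     (\<Sum>t<N. if int N dvd (- int \<tau>) then of_nat P * w (N*P) (int (l t) * (- int \<tau>)) else 0)"
    unfolding corr_general[OF assms assms] diff_self diff_0 ..
  show ?thesis
  proof (cases "N dvd \<tau>")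
    case False
    then have "\<not> int N dvd (- int \<tau>)" by simp
    then show ?thesis unfolding c using False by simp
  next
    case True
    then obtain m where m: "\<tau> = N * m" by auto
    have "w (N*P) (int (l t) * (- int \<tau>)) = w P (- (int (l t) * int m))" for t
    proof -
      have "int (l t) * (- int \<tau>) = int N * (- (int (l t) * int m))" unfolding m by simp
      then show ?thesis using w_scale[of N P "- (int (l t) * int m)"] Npos by (simp only:)
    qed
    then have "pcorr (N*P) (useq N P I rows i) (useq N P I rows i) \<tau> =
        of_nat P * (\<Sum>t<N. w P (- (int (l t) * int m)))"
      unfolding c using True by (simp add: sum_distrib_left)
    also have "(\<Sum>t<N. w P (- (int (l t) * int m))) = S m"
      unfolding S_def using sum.reindex_bij_betw[OF bij_l, of "\<lambda>s. w P (- (int s * int m))"] by simp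
    finally show ?thesis using True m Npos by simp
  qed
qed

lemma SS: "S m * cnj (S m) = (\<Sum>s\<in>D. \<Sum>s'\<in>D. w P (int m * (int s' - int s)))"
proof -
  have "S m * cnj (S m) = (\<Sum>s\<in>D. w P (- (int s * int m))) * (\<Sum>s'\<in>D. w P (int s' * int m))"
    unfolding S_def by (simp add: w_cnj)
  also have "\<dots> = (\<Sum>s\<in>D. \<Sum>s'\<in>D. w P (- (int s * int m)) * w P (int s' * int m))"
    by (rule sum_product)
  also have "\<dots> = (\<Sum>s\<in>D. \<Sum>s'\<in>D. w P (int m * (int s' - int s)))"
    by (simp add: w_add algebra_simps)
  finally show ?thesis .
qed

lemma parseval: "(\<Sum>m<P. S m * cnj (S m)) = of_nat (N * P)"
proof -
  have "(\<Sum>m<P. S m * cnj (S m)) = (\<Sum>m<P. \<Sum>s\<in>D. \<Sum>s'\<in>D. w P (int m * (int s' - int s)))"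
    unfolding SS ..
  also have "\<dots> = (\<Sum>s\<in>D. \<Sum>s'\<in>D. \<Sum>m<P. w P (int m * (int s' - int s)))"
    by (rule trans[OF sum.swap], rule sum.cong[OF refl], rule sum.swap)
  also have "\<dots> = (\<Sum>s\<in>D. \<Sum>s'\<in>D. if s' = s then of_nat P else 0)"
  proof (intro sum.cong refl)
    fix s s' assume "s \<in> D" "s' \<in> D"
    then have "s < P" "s' < P" using D_sub by auto
    then show "(\<Sum>m<P. w P (int m * (int s' - int s))) = (if s' = s then of_nat P else 0)"
      unfolding w_geom[OF Ppos] using dvd_diff_small[of s' P s] by auto
  qed
  also have "\<dots> = of_nat (N * P)" using finD cardD by simp
  finally show ?thesis .
qed

lemma parseval_real: "(\<Sum>m<P. (cmod (S m))^2) = real N * real P"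
proof -
  have "complex_of_real (\<Sum>m<P. (cmod (S m))^2) = (\<Sum>m<P. S m * cnj (S m))"
    by (simp only: of_real_sum complex_norm_square)
  also have "\<dots> = complex_of_real (real N * real P)" unfolding parseval by simp
  finally show ?thesis by (simp only: of_real_eq_iff)
qed

lemma S0: "cmod (S 0) = real N"
  unfolding S_def w_def using cardD by simp

lemma P1: "P \<ge> 2" using PNT N3 by simp

lemma sum_split0: fixes g :: "nat \<Rightarrow> 'a::comm_monoid_add"
  shows "(\<Sum>m<P. g m) = g 0 + (\<Sum>m\<in>{1..<P}. g m)"
proof -
  have "{..<P} = insert 0 {1..<P}" using P1 by auto
  then show ?thesis by simp
qed

lemma lower: "\<exists>m\<in>{1..<P}. (cmod (S m))^2 \<ge> real N * (real P - real N) / (real P - 1)"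
proof (rule ccontr)
  define B where "B = real N * (real P - real N) / (real P - 1)"
  assume "\<not> ?thesis"
  then have lt: "\<And>m. m \<in> {1..<P} \<Longrightarrow> (cmod (S m))^2 < B" unfolding B_def by (meson not_le)
  have "(\<Sum>m\<in>{1..<P}. (cmod (S m))^2) < (\<Sum>m\<in>{1..<P}. B)"
    by (rule sum_strict_mono) (use lt P1 in auto)
  also have "\<dots> = (real P - 1) * B" using P1 by (simp add: of_nat_diff)
  also have "\<dots> = real N * (real P - real N)" unfolding B_def using P1 by simp
  finally have "real N * real P < real N ^ 2 + real N * (real P - real N)"
    using parseval_real sum_split0[of "\<lambda>m. (cmod (S m))^2"] S0 by simp
  then show False by (simp add: power2_eq_square algebra_simps)
qed

lemma shift_inj: "inj_on (\<lambda>e. (e + s) mod P) {..<P}"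
proof (rule inj_onI)
  fix e e' assume "e \<in> {..<P}" "e' \<in> {..<P}" "(e + s) mod P = (e' + s) mod P"
  then have "int ((e + s) mod P) = int ((e' + s) mod P)" "e < P" "e' < P" by auto
  then have "(int e + int s) mod int P = (int e' + int s) mod int P" by (simp add: zmod_int)
  then have "int P dvd ((int e + int s) - (int e' + int s))" by (simp only: mod_eq_dvd_iff)
  then have "int P dvd (int e - int e')" by simp
  then show "e = e'" using dvd_diff_small \<open>e < P\<close> \<open>e' < P\<close> by blast
qed

lemma shift_bij: "bij_betw (\<lambda>e. (e + s) mod P) {..<P} {..<P}"
proof -
  have "(\<lambda>e. (e + s) mod P) ` {..<P} \<subseteq> {..<P}" using Ppos by auto
  then have "(\<lambda>e. (e + s) mod P) ` {..<P} = {..<P}" using endo_inj_surj shift_inj by blast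
  then show ?thesis using shift_inj unfolding bij_betw_def by blast
qed

lemma inner_shift: assumes "s \<in> D"
  shows "(\<Sum>s'\<in>D. w P (int m * (int s' - int s))) =
         (\<Sum>e<P. if (e + s) mod P \<in> D then w P (int m * int e) else 0)"
proof -
  define F where "F s' = (if s' \<in> D then w P (int m * (int s' - int s)) else 0)" for s'
  have "(\<Sum>s'\<in>D. w P (int m * (int s' - int s))) = (\<Sum>s'<P. F s')"
  proof -
    have "{..<P} \<inter> D = D" using D_sub by auto
    then show ?thesis unfolding F_def using sum.inter_restrict[of "{..<P}" "\<lambda>s'. w P (int m * (int s' - int s))" D] by simp
  qed
  also have "\<dots> = (\<Sum>e<P. F ((e + s) mod P))"
    using sum.reindex_bij_betw[OF shift_bij[of s], of F] by simp
  also have "\<dots> = (\<Sum>e<P. if (e + s) mod P \<in> D then w P (int m * int e) else 0)"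
  proof (intro sum.cong refl)
    fix e
    have "int P dvd (int m * (int ((e + s) mod P) - int s) - int m * int e)"
    proof -
      have "int P dvd (int ((e + s) mod P) - (int e + int s))"
        by (simp add: zmod_int mod_eq_dvd_iff[symmetric])
      then have "int P dvd int m * (int ((e + s) mod P) - (int e + int s))" by simp
      then show ?thesis by (simp add: algebra_simps)
    qed
    then have "w P (int m * (int ((e + s) mod P) - int s)) = w P (int m * int e)"
      using w_cong[OF Ppos] by (simp only: mod_eq_dvd_iff)
    then show "F ((e + s) mod P) = (if (e + s) mod P \<in> D then w P (int m * int e) else 0)"
      unfolding F_def by simp
  qed
  finally show ?thesis .
qed

lemma card_shift: "card {s \<in> D. (e + s) mod P \<in> D} = card ((\<lambda>d. (e + d) mod P) ` D \<inter> D)"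
proof -
  have inj: "inj_on (\<lambda>d. (e + d) mod P) {s \<in> D. (e + s) mod P \<in> D}"
  proof -
    have eq: "(\<lambda>d. (e + d) mod P) = (\<lambda>d. (d + e) mod P)" by (simp add: add.commute)
    have "{s \<in> D. (e + s) mod P \<in> D} \<subseteq> {..<P}" using D_sub by auto
    then show ?thesis unfolding eq by (rule inj_on_subset[OF shift_inj])
  qed
  have "(\<lambda>d. (e + d) mod P) ` {s \<in> D. (e + s) mod P \<in> D} = (\<lambda>d. (e + d) mod P) ` D \<inter> D" by auto
  then show ?thesis using card_image[OF inj] by simp
qed

lemma dset_SS: assumes "cyclic_difference_set P N lam D" "m \<in> {1..<P}"
  shows "S m * cnj (S m) = of_nat N - of_nat lam"
proof -
  define c where "c e = card {s \<in> D. (e + s) mod P \<in> D}" for e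
  have "{s \<in> D. (0 + s) mod P \<in> D} = D" using D_sub by auto
  then have c0: "c 0 = N" unfolding c_def using cardD by simp
  have c1: "c e = lam" if "e \<in> {1..<P}" for e
    unfolding c_def card_shift using assms(1) that unfolding cyclic_difference_set_def by blast
  have "S m * cnj (S m) = (\<Sum>s\<in>D. \<Sum>e<P. if (e + s) mod P \<in> D then w P (int m * int e) else 0)"
    unfolding SS by (rule sum.cong[OF refl], rule inner_shift)
  also have "\<dots> = (\<Sum>e<P. \<Sum>s\<in>D. if (e + s) mod P \<in> D then w P (int m * int e) else 0)"
    by (rule sum.swap)
  also have "\<dots> = (\<Sum>e<P. of_nat (c e) * w P (int m * int e))"
  proof (intro sum.cong refl)
    fix e
    show "(\<Sum>s\<in>D. if (e + s) mod P \<in> D then w P (int m * int e) else 0) = of_nat (c e) * w P (int m * int e)"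
      unfolding c_def using sum.inter_filter[OF finD, of "\<lambda>_. w P (int m * int e)" "\<lambda>s. (e + s) mod P \<in> D", symmetric]
      by simp
  qed
  also have "\<dots> = of_nat N + (\<Sum>e\<in>{1..<P}. of_nat lam * w P (int e * int m))"
    unfolding sum_split0[of "\<lambda>e. of_nat (c e) * w P (int m * int e)"] c0
    by (simp add: c1 w_def mult.commute)
  also have "(\<Sum>e\<in>{1..<P}. of_nat lam * w P (int e * int m)) = of_nat lam * ((\<Sum>e<P. w P (int e * int m)) - 1)"
    unfolding sum_split0[of "\<lambda>e. w P (int e * int m)"] by (simp add: sum_distrib_left w_def)
  also have "(\<Sum>e<P. w P (int e * int m)) = 0"
  proof -
    have "\<not> int P dvd int m"
    proof
      assume "int P dvd int m"
      then have "P dvd m" by simp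
      then show False using assms(2) by (auto dest: dvd_imp_le)
    qed
    then show ?thesis unfolding w_geom[OF Ppos] by simp
  qed
  finally show ?thesis by simp
qed

lemma dset: assumes "cyclic_difference_set P N lam D" "m \<in> {1..<P}"
  shows "(cmod (S m))^2 = real N * (real P - real N) / (real P - 1)"
proof -
  have r: "(cmod (S k))^2 = real N - real lam" if "k \<in> {1..<P}" for k
  proof -
    have "complex_of_real ((cmod (S k))^2) = complex_of_real (real N - real lam)"
      unfolding complex_norm_square dset_SS[OF assms(1) that] by simp
    then show ?thesis by (simp only: of_real_eq_iff)
  qed
  have "real N * real P = real N ^ 2 + (\<Sum>k\<in>{1..<P}. real N - real lam)"
    using parseval_real sum_split0[of "\<lambda>m. (cmod (S m))^2"] S0 r by simp
  also have "\<dots> = real N ^ 2 + (real P - 1) * (real N - real lam)" using P1 by (simp add: of_nat_diff)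
  finally have "(real P - 1) * (real N - real lam) = real N * (real P - real N)"
    by (simp add: power2_eq_square algebra_simps)
  then have "real N - real lam = real N * (real P - real N) / (real P - 1)" using P1
    by (simp add: field_simps)
  then show ?thesis using r[OF assms(2)] by simp
qed

end

theorem theorem6:
  fixes N M T P L :: nat and rows :: "nat \<Rightarrow> nat \<Rightarrow> nat" and I :: "nat set"
  assumes "N \<ge> 3" and "M \<ge> 2" and "is_CFR M N rows"
    and "T \<ge> 1" and "P = N + T" and "L = N * P"
    and "I \<subseteq> {..<P}" and "card I = T"
  defines "theta_a \<equiv> Max {cmod (pcorr L (useq N P I rows i) (useq N P I rows i) tau) | i tau.
                              i < M \<and> 0 < tau \<and> tau < L}"
    and "theta_c \<equiv> Max {cmod (pcorr L (useq N P I rows i) (useq N P I rows i') tau) | i i' tau.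
                              i < M \<and> i' < M \<and> i \<noteq> i' \<and> tau < L}"
    and "Omega \<equiv> {s + a * P | s a. s \<in> I \<and> a < N}"
  shows "theta_a \<ge> real P * sqrt (real N * (real P - real N) / (real P - 1))
       \<and> ((\<exists>lam. cyclic_difference_set P N lam ({..<P} - I)) \<longrightarrow>
            theta_a = real P * sqrt (real N * (real P - real N) / (real P - 1)))
       \<and> theta_c = real P
       \<and> (\<forall>i<M. \<forall>n<L.
            (n \<in> Omega \<longrightarrow> uhat N P I rows i n = 0) \<and>
            (n \<notin> Omega \<longrightarrow> cmod (uhat N P I rows i n) = sqrt (real P / real N)))"
proof -
  interpret cfrs N M T P rows I using assms(1-5,7,8) by unfold_locales
  have L: "L = N * P" by fact
  define B where "B = real N * (real P - real N) / (real P - 1)"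
  have B0: "B \<ge> 0" unfolding B_def using PNT P1 by simp
  define A where "A = {cmod (pcorr L (useq N P I rows i) (useq N P I rows i) tau) | i tau.
                              i < M \<and> 0 < tau \<and> tau < L}"
  have ta: "theta_a = Max A" unfolding theta_a_def A_def ..
  have M0: "0 < M" using M2 by simp
  have Aval: "A = (\<lambda>tau. cmod (if N dvd tau then of_nat P * S (tau div N) else 0)) ` {tau. 0 < tau \<and> tau < L}"
  proof (intro equalityI subsetI)
    fix y assume "y \<in> A"
    then obtain i tau where it: "i < M" "0 < tau" "tau < L"
      "y = cmod (pcorr L (useq N P I rows i) (useq N P I rows i) tau)" unfolding A_def by blast
    then have "y = cmod (if N dvd tau then of_nat P * S (tau div N) else 0)"
      unfolding L using autoc[OF it(1)] by simp
    then show "y \<in> (\<lambda>tau. cmod (if N dvd tau then of_nat P * S (tau div N) else 0)) ` {tau. 0 < tau \<and> tau < L}"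
      using it by (intro image_eqI[where x=tau]) auto
  next
    fix y assume "y \<in> (\<lambda>tau. cmod (if N dvd tau then of_nat P * S (tau div N) else 0)) ` {tau. 0 < tau \<and> tau < L}"
    then obtain tau where t: "0 < tau" "tau < L" "y = cmod (if N dvd tau then of_nat P * S (tau div N) else 0)" by auto
    then have "y = cmod (pcorr L (useq N P I rows 0) (useq N P I rows 0) tau)"
      unfolding L using autoc[OF M0] by simp
    then show "y \<in> A" unfolding A_def using M0 t by blast
  qed
  have finA: "finite A" unfolding Aval by simp
  have mem: "real P * cmod (S m) \<in> A" if "m \<in> {1..<P}" for m
  proof -
    have "0 < N * m" "N * m < L" using that Npos unfolding L by auto
    moreover have "cmod (if N dvd (N*m) then of_nat P * S ((N*m) div N) else 0) = real P * cmod (S m)"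
      using Npos by (simp add: norm_mult)
    ultimately show ?thesis unfolding Aval by (metis (mono_tags, lifting) image_eqI mem_Collect_eq)
  qed
  have Aform: "y = 0 \<or> (\<exists>m\<in>{1..<P}. y = real P * cmod (S m))" if "y \<in> A" for y
  proof -
    obtain tau where tau: "0 < tau" "tau < L" "y = cmod (if N dvd tau then of_nat P * S (tau div N) else 0)"
      using \<open>y \<in> A\<close> unfolding Aval by auto
    show ?thesis
    proof (cases "N dvd tau")
      case True
      then obtain m where m: "tau = N * m" by auto
      then have "m \<in> {1..<P}" using tau Npos unfolding L by auto
      moreover have "y = real P * cmod (S m)" using tau m Npos by (simp add: norm_mult)
      ultimately show ?thesis by blast
    qed (use tau in simp)
  qed
  have part1: "theta_a \<ge> real P * sqrt B"
  proof -
    obtain m where m: "m \<in> {1..<P}" "(cmod (S m))^2 \<ge> B" using lower unfolding B_def by blast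
    have "sqrt B \<le> sqrt ((cmod (S m))^2)" using m(2) by (rule real_sqrt_le_mono)
    then have "sqrt B \<le> cmod (S m)" by simp
    then have "real P * sqrt B \<le> real P * cmod (S m)" by (simp add: mult_left_mono)
    also have "\<dots> \<le> Max A" using Max_ge[OF finA mem[OF m(1)]] .
    finally show ?thesis unfolding ta .
  qed
  have part2: "theta_a = real P * sqrt B" if ds: "\<exists>lam. cyclic_difference_set P N lam ({..<P} - I)"
  proof -
    obtain lam where lam: "cyclic_difference_set P N lam D" using ds unfolding D_def by blast
    have eqm: "cmod (S m) = sqrt B" if "m \<in> {1..<P}" for m
    proof -
      have "sqrt ((cmod (S m))^2) = sqrt B" using dset[OF lam that] unfolding B_def by simp
      then show ?thesis by simp
    qed
    have "1 \<in> {1..<P}" using P1 by simp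
    have "Max A = real P * sqrt B"
    proof (rule Max_eqI[OF finA])
      fix y assume "y \<in> A"
      then show "y \<le> real P * sqrt B" using Aform eqm B0 by fastforce
    next
      show "real P * sqrt B \<in> A" using mem[OF \<open>1 \<in> {1..<P}\<close>] eqm[OF \<open>1 \<in> {1..<P}\<close>] by simp
    qed
    then show ?thesis unfolding ta .
  qed
  have part3: "theta_c = real P"
  proof -
    have "{cmod (pcorr L (useq N P I rows i) (useq N P I rows i') tau) | i i' tau.
              i < M \<and> i' < M \<and> i \<noteq> i' \<and> tau < L} = {real P}"
    proof (intro equalityI subsetI)
      fix y assume "y \<in> {cmod (pcorr L (useq N P I rows i) (useq N P I rows i') tau) | i i' tau.
              i < M \<and> i' < M \<and> i \<noteq> i' \<and> tau < L}"
      then show "y \<in> {real P}" unfolding L using cross by auto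
    next
      fix y assume "y \<in> {real P}"
      then have "y = cmod (pcorr L (useq N P I rows 0) (useq N P I rows 1) 0)" unfolding L using cross M2 by auto
      moreover have "0 < M" "1 < M" "(0::nat) \<noteq> 1" "0 < L" using M2 Npos Ppos unfolding L by auto
      ultimately show "y \<in> {cmod (pcorr L (useq N P I rows i) (useq N P I rows i') tau) | i i' tau.
              i < M \<and> i' < M \<and> i \<noteq> i' \<and> tau < L}" by blast
    qed
    then show ?thesis unfolding theta_c_def by simp
  qed
  have part4: "(n \<in> Omega \<longrightarrow> uhat N P I rows i n = 0) \<and>
            (n \<notin> Omega \<longrightarrow> cmod (uhat N P I rows i n) = sqrt (real P / real N))"
    if "i < M" "n < L" for i n
  proof -
    have n: "n < N * P" using that L by simp
    show ?thesis unfolding Omega_def Omega_iff[OF n] uhat_form[OF n]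
      by (simp add: norm_mult cmod_c)
  qed
  show ?thesis using part1 part2 part3 part4 unfolding B_def by blast
qed

end
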